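(* Let $r\in(0,1)$ and let $(\eta(t))_{t\in\mathbb{Z}_+}$ be the nonlinear process with $\mathbb{E}(\eta(0))=r$. Then on a common probability space one can construct this nonlinear process together with an M/D/1 queue $(\zeta(t))_{t\in\mathbb{Z}_+}$ with arrival rate $r$ and $\zeta(0)=\eta(0)$ such that $\eta(t)\le\zeta(t)$ almost surely for every $t\ge 0$. Consequently, if moreover $\mathbb{E}(e^{\lambda_0\eta(0)})<\infty$ for some $\lambda_0>0$, then there is $\lambda>0$ with $\sup_{t\ge0}\mathbb{E}(e^{\lambda\eta(t)})<\infty$.
   Context: The nonlinear process $(\eta(t))_{t\in\mathbb{Z}_+}$ takes values in $\mathbb{Z}_+$: $\eta(0)$ has a given distribution; given $\eta(t)$, set $\rho(t):=\mathbb{P}(\eta(t)>0)$, let $N_{t+1}$ be Poisson with mean $\rho(t)$ (mean $0$ meaning identically $0$), independent of everything before, and set $\eta(t+1):=\eta(t)-\mathbf{1}(\eta(t)>0)+N_{t+1}$. The M/D/1 queue with arrival rate $\rho\ge 0$ is the Markov chain $(\zeta(t))_{t\in\mathbb{Z}_+}$ on $\mathbb{Z}_+$ given by $\zeta(t+1):=\zeta(t)-\mathbf{1}(\zeta(t)>0)+M_{t+1}$, where $(M_t)_{t\ge1}$ are i.i.d. Poisson random variables with mean $\rho$, independent of $\zeta(0)$. *)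

theory Defs
  imports "HOL-Probability.Probability"
begin

(* Poisson(rho) point probabilities; for rho = 0 this is the point mass at 0 (0^0 = 1). *)
definition poisson_prob :: "real \<Rightarrow> nat \<Rightarrow> real" where
  "poisson_prob \<rho> k = exp (- \<rho>) * \<rho> ^ k / fact k"

fun dyn :: "('w \<Rightarrow> nat) \<Rightarrow> (nat \<Rightarrow> 'w \<Rightarrow> nat) \<Rightarrow> nat \<Rightarrow> 'w \<Rightarrow> nat" where
  "dyn x0 A 0 \<omega> = x0 \<omega>"
| "dyn x0 A (Suc t) \<omega> = dyn x0 A t \<omega> - (if dyn x0 A t \<omega> > 0 then 1 else 0) + A (Suc t) \<omega>"

(* Independence of N(t+1) from (eta0, N 1, ..., N t) is expressed via the
   nat-list valued vectors [N(t+1)] and [eta0, N 1, ..., N t]. *)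
(* eta0 and the arrivals N 1, N 2, ... on the probability space P realise the
   nonlinear process with initial law mu0:  eta = dyn eta0 N. *)
definition nonlinear_process ::
  "'w measure \<Rightarrow> nat pmf \<Rightarrow> ('w \<Rightarrow> nat) \<Rightarrow> (nat \<Rightarrow> 'w \<Rightarrow> nat) \<Rightarrow> bool" where
  "nonlinear_process P \<mu>0 \<eta>0 N \<longleftrightarrow>
     prob_space P \<and>
     \<eta>0 \<in> measurable P (count_space UNIV) \<and>
     (\<forall>k. measure P {\<omega> \<in> space P. \<eta>0 \<omega> = k} = pmf \<mu>0 k) \<and>
     (\<forall>t. let \<rho> = measure P {\<omega> \<in> space P. dyn \<eta>0 N t \<omega> > 0} in
        (\<forall>k. measure P {\<omega> \<in> space P. N (Suc t) \<omega> = k} = poisson_prob \<rho> k) \<and>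
        prob_space.indep_var P (count_space UNIV) (\<lambda>\<omega>. [N (Suc t) \<omega>]) (count_space UNIV)
          (\<lambda>\<omega>. \<eta>0 \<omega> # map (\<lambda>i. N i \<omega>) [1..<Suc t]))"

(* zeta0 and arrivals M 1, M 2, ... on P realise an M/D/1 queue with arrival
   rate r: M 1, M 2, ... i.i.d. Poisson(r), jointly independent of zeta0;
   the queue is  zeta = dyn zeta0 M. *)
definition md1_queue ::
  "'w measure \<Rightarrow> real \<Rightarrow> ('w \<Rightarrow> nat) \<Rightarrow> (nat \<Rightarrow> 'w \<Rightarrow> nat) \<Rightarrow> bool" where
  "md1_queue P r \<zeta>0 M \<longleftrightarrow>
     prob_space P \<and>
     prob_space.indep_vars P (\<lambda>_. count_space UNIV)
        (\<lambda>i. if i = 0 then \<zeta>0 else M i) (UNIV :: nat set) \<and>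
     (\<forall>t\<ge>1. \<forall>k. measure P {\<omega> \<in> space P. M t \<omega> = k} = poisson_prob r k)"

end

theory Submission
  imports Defs
begin


lemma poisson_nonneg: "0 \<le> \<rho> \<Longrightarrow> 0 \<le> poisson_prob \<rho> k"
  by (simp add: poisson_prob_def)

lemma poisson_sums: "poisson_prob \<rho> sums 1"
proof -
  have "(\<lambda>n. exp (-\<rho>) * (\<rho> ^ n /\<^sub>R fact n)) sums (exp (-\<rho>) * exp \<rho>)"
    by (intro sums_mult exp_converges)
  moreover have "poisson_prob \<rho> = (\<lambda>n. exp (-\<rho>) * (\<rho> ^ n /\<^sub>R fact n))"
    by (auto simp: fun_eq_iff poisson_prob_def divide_inverse)
  ultimately show ?thesis by (simp add: exp_minus)
qed

lemma poisson_exp_sums: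
  "(\<lambda>k. exp (l * real k) * poisson_prob \<rho> k) sums exp (\<rho> * (exp l - 1))"
proof -
  have "(\<lambda>n. exp (-\<rho>) * ((\<rho> * exp l) ^ n /\<^sub>R fact n)) sums (exp (-\<rho>) * exp (\<rho> * exp l))"
    by (intro sums_mult exp_converges)
  moreover have "exp (l * real k) * poisson_prob \<rho> k = exp (-\<rho>) * ((\<rho> * exp l) ^ k /\<^sub>R fact k)" for k
    by (simp add: poisson_prob_def power_mult_distrib exp_of_nat_mult[symmetric] mult_ac divide_inverse)
  moreover have "exp (-\<rho>) * exp (\<rho> * exp l) = exp (\<rho> * (exp l - 1))"
    by (simp add: exp_add[symmetric] algebra_simps)
  ultimately show ?thesis by simp
qed

lemma poisson_mean_sums:
  "(\<lambda>k. real k * poisson_prob \<rho> k) sums \<rho>"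
proof -
  have "(\<lambda>n. \<rho> * poisson_prob \<rho> n) sums (\<rho> * 1)"
    by (intro sums_mult poisson_sums)
  moreover have "real (Suc n) * poisson_prob \<rho> (Suc n) = \<rho> * poisson_prob \<rho> n" for n
  proof -
    have f: "fact (Suc n) = real (Suc n) * (fact n :: real)" by (simp only: fact_Suc of_nat_mult)
    have "(fact n :: real) \<noteq> 0" by simp
    then show ?thesis unfolding poisson_prob_def f by (simp add: field_simps del: of_nat_Suc)
  qed
  ultimately have "(\<lambda>n. real (Suc n) * poisson_prob \<rho> (Suc n)) sums \<rho>" by simp
  then show ?thesis using sums_Suc_iff[of "\<lambda>k. real k * poisson_prob \<rho> k" \<rho>] by simp
qed

definition pp :: "real \<Rightarrow> nat \<Rightarrow> real" where "pp \<rho> k = exp (-\<rho>) * \<rho> ^ k / fact k"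

lemma cdf_deriv:
  "((\<lambda>x. \<Sum>j<Suc k. poisson_prob x j) has_real_derivative (- poisson_prob y k)) (at y)"
proof (induction k)
  case 0
  show ?case by (auto simp: poisson_prob_def intro!: derivative_eq_intros)
next
  case (Suc k)
  have d: "((\<lambda>x. poisson_prob x (Suc k)) has_real_derivative
            (poisson_prob y k - poisson_prob y (Suc k))) (at y)"
  proof -
    have f: "fact (Suc k) = real (Suc k) * (fact k :: real)" by (simp only: fact_Suc of_nat_mult)
    have "(fact k :: real) \<noteq> 0" by simp
    show ?thesis unfolding poisson_prob_def f
      by (rule derivative_eq_intros refl | simp del: of_nat_Suc)+
         (simp add: field_simps del: of_nat_Suc)
  qed
  show ?case using DERIV_add[OF Suc.IH d] by simp
qed

lemma cdf_mono:
  assumes "0 \<le> \<rho>" "\<rho> \<le> r"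
  shows "(\<Sum>j<k. poisson_prob r j) \<le> (\<Sum>j<k. poisson_prob \<rho> j)"
proof (cases k)
  case 0 then show ?thesis by simp
next
  case (Suc m)
  show ?thesis unfolding Suc
  proof (rule DERIV_nonpos_imp_nonincreasing[OF assms(2)])
    fix x assume "\<rho> \<le> x" "x \<le> r"
    show "\<exists>y. ((\<lambda>x. \<Sum>j<Suc m. poisson_prob x j) has_real_derivative y) (at x) \<and> y \<le> 0"
      apply (rule exI[of _ "- poisson_prob x m"])
      apply (rule conjI[OF cdf_deriv])
      using assms \<open>\<rho> \<le> x\<close> poisson_nonneg[of x m] by simp
  qed
qed


lemma nn_int_nat:
  fixes X :: "'w \<Rightarrow> nat"
  assumes X: "X \<in> measurable P (count_space UNIV)"
  shows "(\<integral>\<^sup>+\<omega>. g (X \<omega>) \<partial>P) = (\<Sum>k. g k * emeasure P {\<omega>\<in>space P. X \<omega> = k})"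
proof -
  have "(\<integral>\<^sup>+\<omega>. g (X \<omega>) \<partial>P) = (\<integral>\<^sup>+\<omega>. (\<Sum>k. g k * indicator {\<omega>\<in>space P. X \<omega> = k} \<omega>) \<partial>P)"
  proof (intro nn_integral_cong)
    fix \<omega> assume "\<omega> \<in> space P"
    then show "g (X \<omega>) = (\<Sum>k. g k * indicator {\<omega>\<in>space P. X \<omega> = k} \<omega>)"
      by (subst suminf_cmult_indicator[where i = "X \<omega>"]) (auto simp: disjoint_family_on_def)
  qed
  also have "\<dots> = (\<Sum>k. \<integral>\<^sup>+\<omega>. g k * indicator {\<omega>\<in>space P. X \<omega> = k} \<omega> \<partial>P)"
    by (rule nn_integral_suminf) (use X in measurable)
  also have "\<dots> = (\<Sum>k. g k * emeasure P {\<omega>\<in>space P. X \<omega> = k})"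
    by (intro suminf_cong nn_integral_cmult_indicator) (use X in measurable)
  finally show ?thesis .
qed

definition Sf :: "(nat \<Rightarrow> real) \<Rightarrow> nat \<Rightarrow> real" where "Sf f k = (\<Sum>j<k. f j)"
definition Qf :: "(nat \<Rightarrow> real) \<Rightarrow> real \<Rightarrow> nat" where
  "Qf f u = (if u < 1 then (LEAST k. u \<le> Sf f (Suc k)) else 0)"

lemma Sf_ex:
  assumes "\<And>k. 0 \<le> f k" "f sums 1" "u < 1"
  shows "\<exists>k. u \<le> Sf f (Suc k)"
proof -
  have "(\<lambda>n. \<Sum>i<n. f i) \<longlonglongrightarrow> 1" using assms(2) by (simp add: sums_def)
  then have "eventually (\<lambda>n. u < (\<Sum>i<n. f i)) sequentially" using assms(3) by (rule order_tendstoD)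
  then obtain n where "u < (\<Sum>i<n. f i)" by (auto simp: eventually_sequentially)
  moreover have "(\<Sum>i<n. f i) \<le> (\<Sum>i<Suc n. f i)" using assms(1)[of n] by simp
  ultimately show ?thesis unfolding Sf_def by (intro exI[of _ n]) simp
qed

lemma Sf_bounds:
  assumes "\<And>k. 0 \<le> f k" "f sums 1"
  shows "0 \<le> Sf f k" "Sf f k \<le> 1" "Sf f (Suc k) = Sf f k + f k"
proof -
  show "0 \<le> Sf f k" unfolding Sf_def using assms(1) by (simp add: sum_nonneg)
  show "Sf f k \<le> 1" unfolding Sf_def using assms sum_le_suminf[of f "{..<k}"] sums_unique[OF assms(2)]
    by (auto simp: sums_summable)
  show "Sf f (Suc k) = Sf f k + f k" by (simp add: Sf_def)
qed

lemma Qf_char: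
  assumes f: "\<And>k. 0 \<le> f k" "f sums 1" and u: "0 < u" "u < 1"
  shows "Qf f u = k \<longleftrightarrow> Sf f k < u \<and> u \<le> Sf f (Suc k)"
proof
  obtain k0 where k0: "u \<le> Sf f (Suc k0)" using Sf_ex[OF f u(2)] by blast
  assume q: "Qf f u = k"
  then have q': "(LEAST k. u \<le> Sf f (Suc k)) = k" using u by (simp add: Qf_def)
  have "u \<le> Sf f (Suc k)" using LeastI[of "\<lambda>k. u \<le> Sf f (Suc k)", OF k0] q' by simp
  moreover have "Sf f k < u"
  proof (cases k)
    case 0 then show ?thesis using u by (simp add: Sf_def)
  next
    case (Suc j)
    then have "\<not> u \<le> Sf f (Suc j)" using not_less_Least[of j "\<lambda>k. u \<le> Sf f (Suc k)"] q' by simp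
    then show ?thesis using Suc by simp
  qed
  ultimately show "Sf f k < u \<and> u \<le> Sf f (Suc k)" by simp
next
  assume h: "Sf f k < u \<and> u \<le> Sf f (Suc k)"
  have mono: "Sf f (Suc j) \<le> Sf f k" if "j < k" for j
    unfolding Sf_def using f(1) that by (intro sum_mono2) auto
  have "(LEAST k. u \<le> Sf f (Suc k)) = k"
  proof (rule Least_equality)
    show "u \<le> Sf f (Suc k)" using h by simp
    fix y assume "u \<le> Sf f (Suc y)"
    then show "k \<le> y" using mono[of y] h by (cases "y < k") auto
  qed
  then show "Qf f u = k" using u by (simp add: Qf_def)
qed

lemma Qf_meas: "Qf f \<in> measurable borel (count_space UNIV)"
  unfolding Qf_def by measurable

definition Umeas :: "real measure" where "Umeas = uniform_measure lborel {0<..<1}"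

lemma Umeas_prob: "prob_space Umeas"
  unfolding Umeas_def by (rule prob_space_uniform_measure) auto

lemma sets_Umeas[measurable_cong, simp]: "sets Umeas = sets borel"
  by (simp add: Umeas_def)

lemma Qf_measure:
  assumes f: "\<And>k. 0 \<le> f k" "f sums 1"
  shows "emeasure Umeas {u. Qf f u = k} = ennreal (f k)"
proof -
  have m: "{u. Qf f u = k} \<in> sets borel"
    using measurable_sets[OF Qf_meas[of f], of "{k}"] by (simp add: vimage_def)
  have eq: "{0<..<1} \<inter> {u. Qf f u = k} = {0<..<1} \<inter> {Sf f k<..Sf f (Suc k)}"
  proof (intro set_eqI iffI)
    fix x assume "x \<in> {0<..<1} \<inter> {u. Qf f u = k}"
    then show "x \<in> {0<..<1} \<inter> {Sf f k<..Sf f (Suc k)}" using Qf_char[OF f, of x k] by auto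
  next
    fix x assume "x \<in> {0<..<1} \<inter> {Sf f k<..Sf f (Suc k)}"
    then show "x \<in> {0<..<1} \<inter> {u. Qf f u = k}" using Qf_char[OF f, of x k] by auto
  qed
  have b: "0 \<le> Sf f k" "Sf f (Suc k) \<le> 1" "Sf f (Suc k) = Sf f k + f k"
    using Sf_bounds[OF f] by blast+
  have s1: "{Sf f k<..<Sf f (Suc k)} \<subseteq> {0<..<1::real} \<inter> {Sf f k<..Sf f (Suc k)}"
    using b by auto
  have s2: "{0<..<1::real} \<inter> {Sf f k<..Sf f (Suc k)} \<subseteq> {Sf f k<..Sf f (Suc k)}" by auto
  have "emeasure lborel ({0<..<1} \<inter> {Sf f k<..Sf f (Suc k)}) = ennreal (f k)"
  proof (rule antisym)
    show "emeasure lborel ({0<..<1} \<inter> {Sf f k<..Sf f (Suc k)}) \<le> ennreal (f k)"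
      using emeasure_mono[OF s2, of lborel] b f(1)[of k] by (simp add: emeasure_lborel_Ioc)
    show "ennreal (f k) \<le> emeasure lborel ({0<..<1} \<inter> {Sf f k<..Sf f (Suc k)})"
      using emeasure_mono[OF s1, of lborel] b f(1)[of k] by (simp add: emeasure_lborel_Ioo)
  qed
  then show ?thesis unfolding Umeas_def
    using m by (simp add: emeasure_uniform_measure eq divide_ennreal_def)
qed

lemma Qf_measure':
  assumes f: "\<And>k. 0 \<le> f k" "f sums 1"
  shows "measure Umeas {u. Qf f u = k} = f k"
  using Qf_measure[OF f, of k] f(1)[of k] by (simp add: measure_def)

lemma Qf_mono:
  assumes g: "\<And>k. 0 \<le> g k" "g sums 1"
    and le: "\<And>k. Sf g k \<le> Sf f k"
  shows "Qf f u \<le> Qf g u"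
proof (cases "u < 1")
  case True
  obtain k0 where k0: "u \<le> Sf g (Suc k0)" using Sf_ex[OF g True] by blast
  have "u \<le> Sf g (Suc (LEAST k. u \<le> Sf g (Suc k)))" by (rule LeastI[of _ k0]) (rule k0)
  then have "u \<le> Sf f (Suc (LEAST k. u \<le> Sf g (Suc k)))" using le order_trans by blast
  then have "(LEAST k. u \<le> Sf f (Suc k)) \<le> (LEAST k. u \<le> Sf g (Suc k))" by (rule Least_le)
  then show ?thesis using True by (simp add: Qf_def)
qed (simp add: Qf_def)


lemma (in prob_space) indep_var_nn_mult:
  fixes X Y :: "'a \<Rightarrow> ennreal"
  assumes "indep_var borel X borel Y"
  shows "(\<integral>\<^sup>+\<omega>. X \<omega> * Y \<omega> \<partial>M) = (\<integral>\<^sup>+\<omega>. X \<omega> \<partial>M) * (\<integral>\<^sup>+\<omega>. Y \<omega> \<partial>M)"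
proof -
  have "indep_vars (case_bool borel borel) (case_bool X Y) UNIV"
    using assms unfolding indep_var_def .
  then have "indep_vars (\<lambda>_. borel) (case_bool X Y) UNIV"
    by (rule indep_vars_cong[THEN iffD1, rotated -1]) (auto split: bool.split)
  then have "(\<integral>\<^sup>+\<omega>. (\<Prod>i\<in>UNIV. case_bool X Y i \<omega>) \<partial>M) = (\<Prod>i\<in>UNIV. \<integral>\<^sup>+\<omega>. case_bool X Y i \<omega> \<partial>M)"
    by (intro indep_vars_nn_integral) auto
  then show ?thesis
    by (simp add: UNIV_bool mult.commute)
qed

lemma ennreal_suminf_sums:
  assumes "\<And>k. 0 \<le> f k" "f sums x"
  shows "(\<Sum>k. ennreal (f k)) = ennreal x"
  using suminf_ennreal2[OF assms(1) sums_summable[OF assms(2)]] sums_unique[OF assms(2)] by simp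

lemma dyn_cong:
  assumes "x0 \<omega> = y0 \<omega>'" "\<And>i. 1 \<le> i \<Longrightarrow> i \<le> t \<Longrightarrow> A i \<omega> = B i \<omega>'"
  shows "dyn x0 A t \<omega> = dyn y0 B t \<omega>'"
  using assms by (induction t) auto

lemma dyn_mono:
  assumes "x0 \<omega> \<le> y0 \<omega>'" "\<And>i. 1 \<le> i \<Longrightarrow> i \<le> t \<Longrightarrow> A i \<omega> \<le> B i \<omega>'"
  shows "dyn x0 A t \<omega> \<le> dyn y0 B t \<omega>'"
  using assms
proof (induction t)
  case 0 then show ?case by simp
next
  case (Suc t)
  have "dyn x0 A t \<omega> \<le> dyn y0 B t \<omega>'" using Suc by auto
  moreover have "A (Suc t) \<omega> \<le> B (Suc t) \<omega>'" using Suc.prems by auto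
  ultimately show ?case by auto
qed

definition hfun :: "nat \<Rightarrow> nat list \<Rightarrow> nat" where
  "hfun t xs = dyn (\<lambda>_. xs ! 0) (\<lambda>i _. xs ! i) t ()"

locale nlp =
  fixes P :: "'w measure" and \<mu>0 :: "nat pmf" and \<eta>0 :: "'w \<Rightarrow> nat" and N :: "nat \<Rightarrow> 'w \<Rightarrow> nat"
  assumes np: "nonlinear_process P \<mu>0 \<eta>0 N"

sublocale nlp \<subseteq> prob_space P
  using np unfolding nonlinear_process_def by simp

context nlp
begin

definition rho :: "nat \<Rightarrow> real" where
  "rho t = measure P {\<omega>\<in>space P. dyn \<eta>0 N t \<omega> > 0}"

definition Lst :: "nat \<Rightarrow> 'w \<Rightarrow> nat list" where
  "Lst t \<omega> = \<eta>0 \<omega> # map (\<lambda>i. N i \<omega>) [1..<Suc t]"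

lemma distN: "measure P {\<omega>\<in>space P. N (Suc t) \<omega> = k} = poisson_prob (rho t) k"
  using np unfolding nonlinear_process_def rho_def Let_def by blast

lemma dist0: "measure P {\<omega>\<in>space P. \<eta>0 \<omega> = k} = pmf \<mu>0 k"
  using np unfolding nonlinear_process_def by blast

lemma meas0[measurable]: "\<eta>0 \<in> measurable P (count_space UNIV)"
  using np unfolding nonlinear_process_def by blast

lemma indep: "indep_var (count_space UNIV) (\<lambda>\<omega>. [N (Suc t) \<omega>]) (count_space UNIV) (Lst t)"
  using np unfolding nonlinear_process_def rho_def Let_def Lst_def by blast

lemma measL[measurable]: "Lst t \<in> measurable P (count_space UNIV)"
  using indep_var_rv2[OF indep] .

lemma measN[measurable]: "N (Suc t) \<in> measurable P (count_space UNIV)"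
proof -
  have "(\<lambda>\<omega>. hd [N (Suc t) \<omega>]) \<in> measurable P (count_space UNIV)"
    using indep_var_rv1[OF indep, of t] by measurable
  then show ?thesis by simp
qed

lemma dyn_L: "dyn \<eta>0 N t \<omega> = hfun t (Lst t \<omega>)"
  unfolding hfun_def
proof (rule dyn_cong)
  show "\<eta>0 \<omega> = Lst t \<omega> ! 0" by (simp add: Lst_def)
  fix i assume "1 \<le> i" "i \<le> t"
  then show "N i \<omega> = Lst t \<omega> ! i"
    by (cases i) (auto simp: Lst_def nth_map nth_upt simp del: upt_Suc)
qed

lemma meas_dyn[measurable]: "(\<lambda>\<omega>. dyn \<eta>0 N t \<omega>) \<in> measurable P (count_space UNIV)"
proof -
  have "(\<lambda>\<omega>. hfun t (Lst t \<omega>)) \<in> measurable P (count_space UNIV)" by measurable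
  then show ?thesis by (simp add: dyn_L)
qed

lemma rho_nonneg: "0 \<le> rho t" by (simp add: rho_def)

lemma emeasN: "emeasure P {\<omega>\<in>space P. N (Suc t) \<omega> = k} = ennreal (poisson_prob (rho t) k)"
  by (simp add: emeasure_eq_measure distN)

lemma emeas0: "emeasure P {\<omega>\<in>space P. \<eta>0 \<omega> = k} = ennreal (pmf \<mu>0 k)"
  by (simp add: emeasure_eq_measure dist0)

lemma int0: "(\<integral>\<^sup>+\<omega>. g (\<eta>0 \<omega>) \<partial>P) = (\<integral>\<^sup>+n. g n \<partial>measure_pmf \<mu>0)"
  by (simp add: nn_int_nat[OF meas0] emeas0 nn_integral_measure_pmf nn_integral_count_space_nat mult.commute)

lemma intN: "(\<integral>\<^sup>+\<omega>. g (N (Suc t) \<omega>) \<partial>P) = (\<Sum>k. g k * ennreal (poisson_prob (rho t) k))"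
  by (simp add: nn_int_nat[OF measN] emeasN)

lemma mean_step:
  "(\<integral>\<^sup>+\<omega>. of_nat (dyn \<eta>0 N (Suc t) \<omega>) \<partial>P) = (\<integral>\<^sup>+\<omega>. of_nat (dyn \<eta>0 N t \<omega>) \<partial>P)"
proof -
  define d where "d = (\<lambda>\<omega>. dyn \<eta>0 N t \<omega>)"
  define s where "s = (\<lambda>\<omega>. if d \<omega> > 0 then 1 else (0::nat))"
  have [measurable]: "d \<in> measurable P (count_space UNIV)" unfolding d_def by measurable
  have [measurable]: "s \<in> measurable P (count_space UNIV)" unfolding s_def by measurable
  have "(\<integral>\<^sup>+\<omega>. of_nat (dyn \<eta>0 N (Suc t) \<omega>) \<partial>P)
      = (\<integral>\<^sup>+\<omega>. (of_nat (d \<omega> - s \<omega>) + of_nat (N (Suc t) \<omega>) :: ennreal) \<partial>P)"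
  proof (intro nn_integral_cong)
    fix \<omega>
    have "dyn \<eta>0 N (Suc t) \<omega> = (d \<omega> - s \<omega>) + N (Suc t) \<omega>"
      unfolding d_def s_def by simp
    then show "(of_nat (dyn \<eta>0 N (Suc t) \<omega>) :: ennreal) = of_nat (d \<omega> - s \<omega>) + of_nat (N (Suc t) \<omega>)"
      by (simp only: of_nat_add)
  qed
  also have "\<dots> = (\<integral>\<^sup>+\<omega>. of_nat (d \<omega> - s \<omega>) \<partial>P) + (\<integral>\<^sup>+\<omega>. of_nat (N (Suc t) \<omega>) \<partial>P)"
    by (rule nn_integral_add) measurable
  also have "(\<integral>\<^sup>+\<omega>. of_nat (N (Suc t) \<omega>) \<partial>P) = ennreal (rho t)"
  proof -
    have "(\<integral>\<^sup>+\<omega>. of_nat (N (Suc t) \<omega>) \<partial>P) = (\<Sum>k. ennreal (real k * poisson_prob (rho t) k))"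
      unfolding intN by (simp add: ennreal_of_nat_eq_real_of_nat ennreal_mult poisson_nonneg rho_nonneg)
    also have "\<dots> = ennreal (rho t)"
      by (rule ennreal_suminf_sums[OF _ poisson_mean_sums]) (simp add: poisson_nonneg rho_nonneg)
    finally show ?thesis .
  qed
  also have "ennreal (rho t) = (\<integral>\<^sup>+\<omega>. of_nat (s \<omega>) \<partial>P)"
  proof -
    have "(\<integral>\<^sup>+\<omega>. of_nat (s \<omega>) \<partial>P) = (\<integral>\<^sup>+\<omega>. indicator {\<omega>\<in>space P. d \<omega> > 0} \<omega> \<partial>P)"
      by (intro nn_integral_cong) (auto simp: s_def)
    also have "\<dots> = emeasure P {\<omega>\<in>space P. d \<omega> > 0}"
      by (rule nn_integral_indicator) measurable
    finally show ?thesis by (simp add: emeasure_eq_measure rho_def d_def)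
  qed
  also have "(\<integral>\<^sup>+\<omega>. of_nat (d \<omega> - s \<omega>) \<partial>P) + (\<integral>\<^sup>+\<omega>. of_nat (s \<omega>) \<partial>P)
      = (\<integral>\<^sup>+\<omega>. (of_nat (d \<omega> - s \<omega>) + of_nat (s \<omega>) :: ennreal) \<partial>P)"
    by (rule nn_integral_add[symmetric]) measurable
  also have "\<dots> = (\<integral>\<^sup>+\<omega>. of_nat (dyn \<eta>0 N t \<omega>) \<partial>P)"
    by (intro nn_integral_cong) (auto simp: s_def d_def of_nat_add[symmetric] simp del: of_nat_add)
  finally show ?thesis .
qed

lemma mean_const:
  assumes "(\<integral>\<^sup>+n. of_nat n \<partial>measure_pmf \<mu>0) = ennreal r"
  shows "(\<integral>\<^sup>+\<omega>. of_nat (dyn \<eta>0 N t \<omega>) \<partial>P) = ennreal r"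
proof (induction t)
  case 0 then show ?case using assms int0[of of_nat] by simp
next
  case (Suc t) then show ?case using mean_step by simp
qed

lemma rho_le:
  assumes "(\<integral>\<^sup>+n. of_nat n \<partial>measure_pmf \<mu>0) = ennreal r" "0 \<le> r"
  shows "rho t \<le> r"
proof -
  have "ennreal (rho t) = emeasure P {\<omega>\<in>space P. dyn \<eta>0 N t \<omega> > 0}"
    by (simp add: emeasure_eq_measure rho_def)
  also have "\<dots> = (\<integral>\<^sup>+\<omega>. indicator {\<omega>\<in>space P. dyn \<eta>0 N t \<omega> > 0} \<omega> \<partial>P)"
    by (rule nn_integral_indicator[symmetric]) measurable
  also have "\<dots> \<le> (\<integral>\<^sup>+\<omega>. of_nat (dyn \<eta>0 N t \<omega>) \<partial>P)"
    by (intro nn_integral_mono) (auto split: split_indicator)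
  also have "\<dots> = ennreal r" by (rule mean_const[OF assms(1)])
  finally show ?thesis using assms(2) by simp
qed

end


context nlp
begin

definition Fexp :: "real \<Rightarrow> nat \<Rightarrow> ennreal" where
  "Fexp l t = (\<integral>\<^sup>+\<omega>. ennreal (exp (l * real (dyn \<eta>0 N t \<omega>))) \<partial>P)"

lemma exp_step:
  assumes l: "0 \<le> l" and rr: "rho t \<le> r"
  shows "Fexp l (Suc t) \<le> ennreal (exp (-l) * exp (r * (exp l - 1))) * Fexp l t
            + ennreal ((1 - exp (-l)) * exp (r * (exp l - 1)))"
proof -
  define E where "E = exp (r * (exp l - 1))"
  define Y1 where "Y1 = (\<lambda>xs. ennreal (exp (l * real (hd xs :: nat))))"
  define Y2 where "Y2 = (\<lambda>xs. ennreal (exp (l * real (hfun t xs - (if hfun t xs > 0 then 1 else 0)))))"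
  have ind: "indep_var borel (Y1 \<circ> (\<lambda>\<omega>. [N (Suc t) \<omega>])) borel (Y2 \<circ> Lst t)"
    by (rule indep_var_compose[OF indep]) (simp_all add: borel_measurable_count_space)
  have "Fexp l (Suc t) = (\<integral>\<^sup>+\<omega>. (Y1 \<circ> (\<lambda>\<omega>. [N (Suc t) \<omega>])) \<omega> * (Y2 \<circ> Lst t) \<omega> \<partial>P)"
    unfolding Fexp_def
  proof (intro nn_integral_cong)
    fix \<omega>
    define d where "d = dyn \<eta>0 N t \<omega>"
    have e: "dyn \<eta>0 N (Suc t) \<omega> = (d - (if d > 0 then 1 else 0)) + N (Suc t) \<omega>"
      unfolding d_def by simp
    have h: "hfun t (Lst t \<omega>) = d" unfolding d_def by (simp add: dyn_L)
    show "ennreal (exp (l * real (dyn \<eta>0 N (Suc t) \<omega>))) =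
          (Y1 \<circ> (\<lambda>\<omega>. [N (Suc t) \<omega>])) \<omega> * (Y2 \<circ> Lst t) \<omega>"
      unfolding e Y1_def Y2_def o_def h
      by (simp only: of_nat_add distrib_left exp_add ennreal_mult[symmetric] exp_ge_zero mult.commute) simp
  qed
  also have "\<dots> = (\<integral>\<^sup>+\<omega>. (Y1 \<circ> (\<lambda>\<omega>. [N (Suc t) \<omega>])) \<omega> \<partial>P) * (\<integral>\<^sup>+\<omega>. (Y2 \<circ> Lst t) \<omega> \<partial>P)"
    by (rule indep_var_nn_mult[OF ind])
  finally have F1: "Fexp l (Suc t) = (\<integral>\<^sup>+\<omega>. (Y1 \<circ> (\<lambda>\<omega>. [N (Suc t) \<omega>])) \<omega> \<partial>P) * (\<integral>\<^sup>+\<omega>. (Y2 \<circ> Lst t) \<omega> \<partial>P)" .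
  have I1: "(\<integral>\<^sup>+\<omega>. (Y1 \<circ> (\<lambda>\<omega>. [N (Suc t) \<omega>])) \<omega> \<partial>P) \<le> ennreal E"
  proof -
    have "(\<integral>\<^sup>+\<omega>. (Y1 \<circ> (\<lambda>\<omega>. [N (Suc t) \<omega>])) \<omega> \<partial>P)
        = (\<Sum>k. ennreal (exp (l * real k)) * ennreal (poisson_prob (rho t) k))"
      unfolding Y1_def o_def list.sel by (rule intN)
    also have "\<dots> = (\<Sum>k. ennreal (exp (l * real k) * poisson_prob (rho t) k))"
      by (simp add: ennreal_mult poisson_nonneg rho_nonneg)
    also have "\<dots> = ennreal (exp (rho t * (exp l - 1)))"
      by (rule ennreal_suminf_sums[OF _ poisson_exp_sums]) (simp add: poisson_nonneg rho_nonneg)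
    also have "\<dots> \<le> ennreal E"
      unfolding E_def using rr l by (intro ennreal_leI) (simp add: mult_right_mono)
    finally show ?thesis .
  qed
  have I2: "(\<integral>\<^sup>+\<omega>. (Y2 \<circ> Lst t) \<omega> \<partial>P) \<le> ennreal (exp (-l)) * Fexp l t + ennreal (1 - exp (-l))"
  proof -
    have "(\<integral>\<^sup>+\<omega>. (Y2 \<circ> Lst t) \<omega> \<partial>P) \<le>
          (\<integral>\<^sup>+\<omega>. (ennreal (exp (-l)) * ennreal (exp (l * real (dyn \<eta>0 N t \<omega>))) + ennreal (1 - exp (-l))) \<partial>P)"
    proof (intro nn_integral_mono)
      fix \<omega>
      define d where "d = dyn \<eta>0 N t \<omega>"
      have h: "hfun t (Lst t \<omega>) = d" unfolding d_def by (simp add: dyn_L)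
      have el: "exp (-l) \<le> 1" using l by simp
      have "exp (l * real (d - (if d > 0 then 1 else 0))) \<le> exp (-l) * exp (l * real d) + (1 - exp (-l))"
      proof (cases "d > 0")
        case True
        then have "l * real (d - 1) = -l + l * real d" by (simp add: of_nat_diff algebra_simps)
        then have "exp (l * real (d - 1)) = exp (-l) * exp (l * real d)" by (metis exp_add)
        then show ?thesis using True el by simp
      next
        case False then show ?thesis by simp
      qed
      then show "(Y2 \<circ> Lst t) \<omega> \<le> ennreal (exp (-l)) * ennreal (exp (l * real (dyn \<eta>0 N t \<omega>))) + ennreal (1 - exp (-l))"
        unfolding Y2_def o_def h d_def[symmetric] using el
        by (simp add: ennreal_mult[symmetric] ennreal_plus[symmetric] del: ennreal_plus ennreal_plus_if)
    qed
    also have "\<dots> = ennreal (exp (-l)) * Fexp l t + ennreal (1 - exp (-l))"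
      unfolding Fexp_def
      by (subst nn_integral_add) (auto simp: nn_integral_cmult emeasure_space_1)
    finally show ?thesis .
  qed
  have "Fexp l (Suc t) \<le> ennreal E * (ennreal (exp (-l)) * Fexp l t + ennreal (1 - exp (-l)))"
    unfolding F1 by (rule mult_mono[OF I1 I2]) auto
  also have "\<dots> = (ennreal (exp (-l)) * Fexp l t + ennreal (1 - exp (-l))) * ennreal E"
    by (rule mult.commute)
  also have "\<dots> = ennreal (exp (-l) * E) * Fexp l t + ennreal ((1 - exp (-l)) * E)"
  proof -
    have e1: "ennreal (exp (-l) * E) = ennreal (exp (-l)) * ennreal E"
      by (rule ennreal_mult) (auto simp: E_def)
    have e2: "ennreal ((1 - exp (-l)) * E) = ennreal (1 - exp (-l)) * ennreal E"
      using l by (intro ennreal_mult) (auto simp: E_def)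
    show ?thesis unfolding e1 e2 by (simp only: distrib_right) (simp only: mult_ac)
  qed
  finally show ?thesis unfolding E_def .
qed

lemma exp_bound:
  assumes l: "0 \<le> l" and rr: "\<And>t. rho t \<le> r"
    and a: "exp (-l) * exp (r * (exp l - 1)) < 1" and F0: "Fexp l 0 < \<infinity>"
  shows "\<exists>C. \<forall>t. Fexp l t \<le> ennreal C"
proof -
  define a where "a = exp (-l) * exp (r * (exp l - 1))"
  define b where "b = (1 - exp (-l)) * exp (r * (exp l - 1))"
  define C where "C = max (enn2real (Fexp l 0)) (b / (1 - a))"
  have a0: "0 \<le> a" "a < 1" using a by (auto simp: a_def)
  have b0: "0 \<le> b" using l by (simp add: b_def)
  have key: "a * C + b \<le> C"
  proof -
    have "b / (1 - a) \<le> C" by (simp add: C_def)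
    then have "b \<le> (1 - a) * C" using a0 by (simp add: pos_divide_le_eq mult.commute)
    then show ?thesis by (simp add: algebra_simps)
  qed
  have C0: "0 \<le> C" using b0 a0 by (simp add: C_def le_max_iff_disj)
  have "Fexp l t \<le> ennreal C" for t
  proof (induction t)
    case 0
    have "Fexp l 0 = ennreal (enn2real (Fexp l 0))" using F0 by (simp add: ennreal_enn2real)
    also have "\<dots> \<le> ennreal C" by (intro ennreal_leI) (simp add: C_def)
    finally show ?case .
  next
    case (Suc t)
    have "Fexp l (Suc t) \<le> ennreal a * Fexp l t + ennreal b"
      unfolding a_def b_def by (rule exp_step[OF l rr])
    also have "\<dots> \<le> ennreal a * ennreal C + ennreal b"
      using Suc by (intro add_mono mult_left_mono) auto
    also have "\<dots> = ennreal (a * C + b)" using a0 b0 C0 by (simp add: ennreal_mult ennreal_plus)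
    also have "\<dots> \<le> ennreal C" using key by (rule ennreal_leI)
    finally show ?case .
  qed
  then show ?thesis by blast
qed

end

lemma choose_l:
  fixes r l0 :: real
  assumes r: "0 < r" "r < 1" and l0: "0 < l0"
  shows "\<exists>l. 0 < l \<and> l \<le> l0 \<and> exp (-l) * exp (r * (exp l - 1)) < 1"
proof -
  define l where "l = min l0 (- ln r / 2)"
  have lnr: "ln r < 0" using r by simp
  have lpos: "0 < l" using l0 lnr by (simp add: l_def)
  have "l < - ln r" using lnr by (simp add: l_def)
  then have "exp l < exp (- ln r)" by simp
  also have "exp (- ln r) = 1 / r" using r by (simp add: exp_minus inverse_eq_divide)
  finally have rel: "r * exp l < 1" using r by (simp add: field_simps)
  have "1 + (-l) \<le> exp (-l)" by (rule exp_ge_add_one_self)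
  then have "exp l * (1 - l) \<le> exp l * exp (-l)" by (intro mult_left_mono) auto
  then have el: "exp l - 1 \<le> l * exp l" by (simp add: exp_minus field_simps)
  have "r * (exp l - 1) \<le> r * (l * exp l)" using el r by (intro mult_left_mono) auto
  also have "\<dots> = l * (r * exp l)" by simp
  also have "\<dots> < l" using rel lpos by simp
  finally have neg: "-l + r * (exp l - 1) < 0" by simp
  have "exp (-l) * exp (r * (exp l - 1)) = exp (-l + r * (exp l - 1))" by (simp only: exp_add)
  also have "\<dots> < exp 0" using neg by (intro exp_less_mono) simp
  finally have "exp (-l) * exp (r * (exp l - 1)) < 1" by simp
  then show ?thesis using lpos by (intro exI[of _ l]) (simp add: l_def)
qed

lemma mean_mu0:
  assumes "integrable (measure_pmf \<mu>0) real" "measure_pmf.expectation \<mu>0 real = r"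
  shows "(\<integral>\<^sup>+n. of_nat n \<partial>measure_pmf \<mu>0) = ennreal r"
  using nn_integral_eq_integral[OF assms(1)] assms(2) by (simp add: ennreal_of_nat_eq_real_of_nat)

lemma part2:
  fixes \<mu>0 :: "nat pmf" and r :: real
  assumes r: "0 < r" "r < 1"
    and int: "integrable (measure_pmf \<mu>0) real"
    and ex: "measure_pmf.expectation \<mu>0 real = r"
    and l0: "0 < l0" "(\<integral>\<^sup>+ n. ennreal (exp (l0 * real n)) \<partial>measure_pmf \<mu>0) < \<infinity>"
    and np: "nonlinear_process P \<mu>0 \<eta>0 N"
  shows "\<exists>l>0. (SUP t. \<integral>\<^sup>+ \<omega>. ennreal (exp (l * real (dyn \<eta>0 N t \<omega>))) \<partial>P) < \<infinity>"
proof -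
  interpret nlp P \<mu>0 \<eta>0 N by (rule nlp.intro[OF np])
  obtain l where l: "0 < l" "l \<le> l0" "exp (-l) * exp (r * (exp l - 1)) < 1"
    using choose_l[OF r l0(1)] by blast
  have rr: "rho t \<le> r" for t using rho_le[OF mean_mu0[OF int ex]] r by simp
  have "Fexp l 0 = (\<integral>\<^sup>+ n. ennreal (exp (l * real n)) \<partial>measure_pmf \<mu>0)"
    unfolding Fexp_def by (simp add: int0[of "\<lambda>n. ennreal (exp (l * real n))"])
  also have "\<dots> \<le> (\<integral>\<^sup>+ n. ennreal (exp (l0 * real n)) \<partial>measure_pmf \<mu>0)"
    using l by (intro nn_integral_mono ennreal_leI) (simp add: mult_right_mono)
  also have "\<dots> < \<infinity>" by (rule l0(2))
  finally have F0: "Fexp l 0 < \<infinity>" .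
  obtain C where C: "\<And>t. Fexp l t \<le> ennreal C"
    using exp_bound[OF _ rr l(3) F0] l(1) by auto
  have "(SUP t. Fexp l t) \<le> ennreal C" by (rule SUP_least) (rule C)
  also have "\<dots> < \<infinity>" by simp
  finally show ?thesis using l(1) unfolding Fexp_def by blast
qed


lemma meas_map_list:
  fixes Z :: "nat \<Rightarrow> 'a \<Rightarrow> 'b::countable"
  assumes "\<And>i. i \<in> set is \<Longrightarrow> Z i \<in> measurable M (count_space UNIV)"
  shows "(\<lambda>x. map (\<lambda>i. Z i x) is) \<in> measurable M (count_space UNIV)"
  using assms
proof (induction "is")
  case Nil then show ?case by simp
next
  case (Cons a "is")
  have p: "(\<lambda>x. (Z a x, map (\<lambda>i. Z i x) is)) \<in> measurable M (count_space UNIV \<Otimes>\<^sub>M count_space UNIV)"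
    using Cons by (intro measurable_Pair) auto
  have c: "(\<lambda>p. fst p # snd p) \<in> measurable (count_space UNIV \<Otimes>\<^sub>M count_space (UNIV :: 'b list set)) (count_space UNIV)"
    by (simp add: pair_measure_countable)
  from measurable_compose[OF p c] show ?case by simp
qed

lemma Qf_measU[measurable]: "Qf f \<in> measurable Umeas (count_space UNIV)"
  using Qf_meas[of f] by (simp add: measurable_cong_sets[OF sets_Umeas refl])

lemma pmf_sums: "pmf \<mu> sums 1"
proof -
  have "(\<Sum>k. ennreal (pmf \<mu> k)) = 1"
    using nn_integral_pmf[where p=\<mu> and A=UNIV] by (simp add: nn_integral_count_space_nat measure_pmf.emeasure_space_1[simplified])
  then have "(\<lambda>k. ennreal (pmf \<mu> k)) sums ennreal 1"
    using summable_sums[OF summableI[of "\<lambda>k. ennreal (pmf \<mu> k)"]] by simp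
  then show ?thesis by (subst (asm) sums_ennreal) auto
qed

lemma space_Umeas[simp]: "space Umeas = UNIV" by (simp add: Umeas_def)

definition Pm :: "(nat \<Rightarrow> real) measure" where "Pm = PiM UNIV (\<lambda>_. Umeas)"

lemma Pm_prob: "prob_space Pm"
  unfolding Pm_def by (intro prob_space_PiM Umeas_prob)

lemma Pm_coord: "distr Pm Umeas (\<lambda>\<omega>. \<omega> i) = Umeas"
  unfolding Pm_def by (intro distr_PiM_component Umeas_prob) auto

lemma Pm_indep: "prob_space.indep_vars Pm (\<lambda>_. Umeas) (\<lambda>i \<omega>. \<omega> i) UNIV"
proof -
  interpret prob_space Pm by (rule Pm_prob)
  have rv: "\<And>i. (\<lambda>\<omega>. \<omega> i) \<in> measurable Pm Umeas"
    unfolding Pm_def by (rule measurable_component_singleton) simp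
  have "distr Pm (\<Pi>\<^sub>M i\<in>UNIV. Umeas) (\<lambda>x. \<lambda>i\<in>UNIV. x i) = (\<Pi>\<^sub>M i\<in>UNIV. distr Pm Umeas (\<lambda>\<omega>. \<omega> i))"
  proof -
    have "distr Pm (\<Pi>\<^sub>M i\<in>UNIV. Umeas) (\<lambda>x. \<lambda>i\<in>UNIV. x i) = distr Pm Pm (\<lambda>x. x)"
      by (simp add: Pm_def restrict_UNIV)
    also have "\<dots> = Pm" by (rule distr_id)
    also have "\<dots> = (\<Pi>\<^sub>M i\<in>UNIV. distr Pm Umeas (\<lambda>\<omega>. \<omega> i))"
      by (simp only: Pm_coord) (simp add: Pm_def)
    finally show ?thesis .
  qed
  then show ?thesis by (subst indep_vars_iff_distr_eq_PiM[OF _ rv]) auto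
qed

lemma Pm_meas_coord[measurable]: "(\<lambda>\<omega>. \<omega> i) \<in> measurable Pm Umeas"
  unfolding Pm_def by (rule measurable_component_singleton) simp

lemma Pm_Qf:
  assumes f: "\<And>k. 0 \<le> f k" "f sums 1"
  shows "measure Pm {\<omega>\<in>space Pm. Qf f (\<omega> i) = k} = f k"
proof -
  have s: "{u. Qf f u = k} \<in> sets Umeas"
    using measurable_sets[OF Qf_measU[of f], of "{k}"] by (simp add: vimage_def)
  have "measure Pm {\<omega>\<in>space Pm. Qf f (\<omega> i) = k} = measure Pm ((\<lambda>\<omega>. \<omega> i) -` {u. Qf f u = k} \<inter> space Pm)"
    by (rule arg_cong[where f="measure Pm"]) auto
  also have "\<dots> = measure (distr Pm Umeas (\<lambda>\<omega>. \<omega> i)) {u. Qf f u = k}"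
    by (rule measure_distr[symmetric]) (use s in auto)
  also have "\<dots> = f k" by (simp add: Pm_coord Qf_measure'[OF f])
  finally show ?thesis .
qed

lemma np_intro:
  assumes "prob_space P" "\<eta>0 \<in> measurable P (count_space UNIV)"
    "\<forall>k. measure P {\<omega> \<in> space P. \<eta>0 \<omega> = k} = pmf \<mu>0 k"
    "\<forall>t. (\<forall>k. measure P {\<omega> \<in> space P. N (Suc t) \<omega> = k} = poisson_prob (measure P {\<omega> \<in> space P. dyn \<eta>0 N t \<omega> > 0}) k) \<and>
        prob_space.indep_var P (count_space UNIV) (\<lambda>\<omega>. [N (Suc t) \<omega>]) (count_space UNIV)
          (\<lambda>\<omega>. \<eta>0 \<omega> # map (\<lambda>i. N i \<omega>) [1..<Suc t])"
  shows "nonlinear_process P \<mu>0 \<eta>0 N"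
  unfolding nonlinear_process_def Let_def using assms by blast

definition eta0c :: "nat pmf \<Rightarrow> (nat \<Rightarrow> real) \<Rightarrow> nat" where
  "eta0c \<mu>0 \<omega> = Qf (pmf \<mu>0) (\<omega> 0)"

definition Mc :: "real \<Rightarrow> nat \<Rightarrow> (nat \<Rightarrow> real) \<Rightarrow> nat" where
  "Mc r i \<omega> = Qf (poisson_prob r) (\<omega> i)"

fun Ns :: "nat pmf \<Rightarrow> nat \<Rightarrow> nat \<Rightarrow> (nat \<Rightarrow> real) \<Rightarrow> nat" where
  "Ns \<mu>0 0 = (\<lambda>i \<omega>. 0)"
| "Ns \<mu>0 (Suc t) = (Ns \<mu>0 t)(Suc t := (\<lambda>\<omega>. Qf (poisson_prob
      (measure Pm {\<omega>\<in>space Pm. dyn (eta0c \<mu>0) (Ns \<mu>0 t) t \<omega> > 0})) (\<omega> (Suc t))))"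

definition Nc :: "nat pmf \<Rightarrow> nat \<Rightarrow> (nat \<Rightarrow> real) \<Rightarrow> nat" where
  "Nc \<mu>0 i = Ns \<mu>0 i i"

definition rhoc :: "nat pmf \<Rightarrow> nat \<Rightarrow> real" where
  "rhoc \<mu>0 t = measure Pm {\<omega>\<in>space Pm. dyn (eta0c \<mu>0) (Nc \<mu>0) t \<omega> > 0}"

lemma Ns_stable: "i \<le> t \<Longrightarrow> Ns \<mu>0 t i = Ns \<mu>0 i i"
proof (induction t)
  case 0 then show ?case by simp
next
  case (Suc t) then show ?case by (cases "i = Suc t") auto
qed

lemma dyn_Nc: "dyn (eta0c \<mu>0) (Nc \<mu>0) t = dyn (eta0c \<mu>0) (Ns \<mu>0 t) t"
proof (rule ext, rule dyn_cong)
  fix \<omega> i assume "1 \<le> i" "i \<le> t"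
  then show "Nc \<mu>0 i \<omega> = Ns \<mu>0 t i \<omega>" using Ns_stable[of i t \<mu>0] unfolding Nc_def by simp
qed simp

lemma Nc_Suc: "Nc \<mu>0 (Suc t) \<omega> = Qf (poisson_prob (rhoc \<mu>0 t)) (\<omega> (Suc t))"
  by (simp add: Nc_def rhoc_def dyn_Nc)

lemma rhoc_nonneg: "0 \<le> rhoc \<mu>0 t" by (simp add: rhoc_def)

lemma construct_np: "nonlinear_process Pm \<mu>0 (eta0c \<mu>0) (Nc \<mu>0)"
proof -
  define g where "g i = (if i = 0 then pmf \<mu>0 else poisson_prob (rhoc \<mu>0 (i - 1)))" for i
  have meas0: "eta0c \<mu>0 \<in> measurable Pm (count_space UNIV)"
    unfolding eta0c_def by measurable
  have dist0: "measure Pm {\<omega>\<in>space Pm. eta0c \<mu>0 \<omega> = k} = pmf \<mu>0 k" for k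
    unfolding eta0c_def by (rule Pm_Qf) (auto intro: pmf_sums)
  have distN: "measure Pm {\<omega>\<in>space Pm. Nc \<mu>0 (Suc t) \<omega> = k} = poisson_prob (rhoc \<mu>0 t) k" for t k
    unfolding Nc_Suc by (rule Pm_Qf) (auto intro: poisson_sums poisson_nonneg rhoc_nonneg)
  have ind: "prob_space.indep_var Pm (count_space UNIV) (\<lambda>\<omega>. [Nc \<mu>0 (Suc t) \<omega>]) (count_space UNIV)
          (\<lambda>\<omega>. eta0c \<mu>0 \<omega> # map (\<lambda>i. Nc \<mu>0 i \<omega>) [1..<Suc t])" for t
  proof -
    have r: "prob_space.indep_var Pm (PiM {Suc t} (\<lambda>_. Umeas)) (\<lambda>\<omega>. restrict (\<lambda>i. \<omega> i) {Suc t})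
                       (PiM {..t} (\<lambda>_. Umeas)) (\<lambda>\<omega>. restrict (\<lambda>i. \<omega> i) {..t})"
      by (rule prob_space.indep_var_restrict[OF Pm_prob Pm_indep]) auto
    have mc: "(\<lambda>x. Qf h (x i)) \<in> measurable (PiM I (\<lambda>_. Umeas)) (count_space UNIV)" if "i \<in> I" for i I h
      by (rule measurable_compose[OF measurable_component_singleton[of i I "\<lambda>_. Umeas", OF that] Qf_measU])
    define Y1 where "Y1 = (\<lambda>x::nat \<Rightarrow> real. map (\<lambda>i. Qf (g i) (x i)) [Suc t])"
    define Y2 where "Y2 = (\<lambda>x::nat \<Rightarrow> real. map (\<lambda>i. Qf (g i) (x i)) [0..<Suc t])"
    have m1: "Y1 \<in> measurable (PiM {Suc t} (\<lambda>_. Umeas)) (count_space UNIV)"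
      unfolding Y1_def
      by (rule meas_map_list) (rule mc, simp)
    have m2: "Y2 \<in> measurable (PiM {..t} (\<lambda>_. Umeas)) (count_space UNIV)"
      unfolding Y2_def
      by (rule meas_map_list) (rule mc, auto)
    have "prob_space.indep_var Pm (count_space UNIV) (Y1 \<circ> (\<lambda>\<omega>. restrict (\<lambda>i. \<omega> i) {Suc t}))
                   (count_space UNIV) (Y2 \<circ> (\<lambda>\<omega>. restrict (\<lambda>i. \<omega> i) {..t}))"
      by (rule prob_space.indep_var_compose[OF Pm_prob r m1 m2])
    moreover have "(Y1 \<circ> (\<lambda>\<omega>. restrict (\<lambda>i. \<omega> i) {Suc t})) = (\<lambda>\<omega>. [Nc \<mu>0 (Suc t) \<omega>])"
      by (auto simp: Y1_def g_def Nc_Suc fun_eq_iff)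
    moreover have "(Y2 \<circ> (\<lambda>\<omega>. restrict (\<lambda>i. \<omega> i) {..t})) =
                   (\<lambda>\<omega>. eta0c \<mu>0 \<omega> # map (\<lambda>i. Nc \<mu>0 i \<omega>) [1..<Suc t])"
    proof (rule ext)
      fix \<omega> :: "nat \<Rightarrow> real"
      have "map (\<lambda>i. Qf (g i) (restrict (\<lambda>i. \<omega> i) {..t} i)) [1..<Suc t] = map (\<lambda>i. Nc \<mu>0 i \<omega>) [1..<Suc t]"
      proof (rule map_cong[OF refl])
        fix i assume "i \<in> set [1..<Suc t]"
        then have it: "1 \<le> i" "i \<le> t" by (simp_all del: upt_Suc)
        then obtain j where j: "i = Suc j" "i \<le> t" by (cases i) auto
        then show "Qf (g i) (restrict (\<lambda>i. \<omega> i) {..t} i) = Nc \<mu>0 i \<omega>"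
          by (simp add: g_def Nc_Suc)
      qed
      then show "(Y2 \<circ> (\<lambda>\<omega>. restrict (\<lambda>i. \<omega> i) {..t})) \<omega> = eta0c \<mu>0 \<omega> # map (\<lambda>i. Nc \<mu>0 i \<omega>) [1..<Suc t]"
        by (simp add: Y2_def upt_conv_Cons g_def eta0c_def del: upt_Suc)
    qed
    ultimately show ?thesis by simp
  qed
  have distN': "\<And>t k. measure Pm {\<omega>\<in>space Pm. Nc \<mu>0 (Suc t) \<omega> = k} =
      poisson_prob (measure Pm {\<omega>\<in>space Pm. dyn (eta0c \<mu>0) (Nc \<mu>0) t \<omega> > 0}) k"
    using distN unfolding rhoc_def .
  have A: "\<forall>t. (\<forall>k. measure Pm {\<omega>\<in>space Pm. Nc \<mu>0 (Suc t) \<omega> = k} =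
      poisson_prob (measure Pm {\<omega>\<in>space Pm. dyn (eta0c \<mu>0) (Nc \<mu>0) t \<omega> > 0}) k) \<and>
      prob_space.indep_var Pm (count_space UNIV) (\<lambda>\<omega>. [Nc \<mu>0 (Suc t) \<omega>]) (count_space UNIV)
          (\<lambda>\<omega>. eta0c \<mu>0 \<omega> # map (\<lambda>i. Nc \<mu>0 i \<omega>) [1..<Suc t])"
  proof (rule allI, rule conjI)
    fix t show "\<forall>k. measure Pm {\<omega>\<in>space Pm. Nc \<mu>0 (Suc t) \<omega> = k} =
      poisson_prob (measure Pm {\<omega>\<in>space Pm. dyn (eta0c \<mu>0) (Nc \<mu>0) t \<omega> > 0}) k"
      using distN' by (rule allI)
    show "prob_space.indep_var Pm (count_space UNIV) (\<lambda>\<omega>. [Nc \<mu>0 (Suc t) \<omega>]) (count_space UNIV)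
          (\<lambda>\<omega>. eta0c \<mu>0 \<omega> # map (\<lambda>i. Nc \<mu>0 i \<omega>) [1..<Suc t])" by (rule ind)
  qed
  have B: "\<forall>k. measure Pm {\<omega>\<in>space Pm. eta0c \<mu>0 \<omega> = k} = pmf \<mu>0 k" using dist0 by (rule allI)
  show ?thesis by (rule np_intro[of Pm "eta0c \<mu>0" \<mu>0 "Nc \<mu>0", OF Pm_prob meas0 B A])
qed


lemma construct_md1: "0 \<le> r \<Longrightarrow> md1_queue Pm r (eta0c \<mu>0) (Mc r)"
proof -
  assume r: "0 \<le> r"
  define Y where "Y i = Qf (if i = 0 then pmf \<mu>0 else poisson_prob r)" for i :: nat
  have "prob_space.indep_vars Pm (\<lambda>_. count_space UNIV) (\<lambda>i x. Y i (x i)) UNIV"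
    by (rule prob_space.indep_vars_compose2[OF Pm_prob Pm_indep]) (simp add: Y_def)
  moreover have "(\<lambda>i x. Y i (x i)) = (\<lambda>i. if i = 0 then eta0c \<mu>0 else Mc r i)"
    by (auto simp: fun_eq_iff Y_def eta0c_def Mc_def)
  ultimately have ind: "prob_space.indep_vars Pm (\<lambda>_. count_space UNIV) (\<lambda>i. if i = 0 then eta0c \<mu>0 else Mc r i) UNIV"
    by simp
  have d: "\<forall>t\<ge>1. \<forall>k. measure Pm {\<omega>\<in>space Pm. Mc r t \<omega> = k} = poisson_prob r k"
    unfolding Mc_def using r by (auto intro!: Pm_Qf poisson_sums poisson_nonneg)
  show ?thesis unfolding md1_queue_def using Pm_prob ind d by blast
qed

lemma construct_le:
  assumes r: "0 \<le> r" and mean: "(\<integral>\<^sup>+n. of_nat n \<partial>measure_pmf \<mu>0) = ennreal r"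
  shows "dyn (eta0c \<mu>0) (Nc \<mu>0) t \<omega> \<le> dyn (eta0c \<mu>0) (Mc r) t \<omega>"
proof (rule dyn_mono)
  interpret nlp Pm \<mu>0 "eta0c \<mu>0" "Nc \<mu>0" by (rule nlp.intro[OF construct_np])
  fix i assume "1 \<le> i" "i \<le> t"
  then obtain j where j: "i = Suc j" by (cases i) auto
  have rj: "rhoc \<mu>0 j \<le> r" using rho_le[OF mean r, of j] by (simp add: rho_def rhoc_def)
  have "Qf (poisson_prob (rhoc \<mu>0 j)) (\<omega> i) \<le> Qf (poisson_prob r) (\<omega> i)"
  proof (rule Qf_mono)
    show "\<And>k. 0 \<le> poisson_prob r k" using r by (rule poisson_nonneg)
    show "poisson_prob r sums 1" by (rule poisson_sums)
    show "\<And>k. Sf (poisson_prob r) k \<le> Sf (poisson_prob (rhoc \<mu>0 j)) k"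
      unfolding Sf_def using rj rhoc_nonneg by (intro cdf_mono) auto
  qed
  then show "Nc \<mu>0 i \<omega> \<le> Mc r i \<omega>" by (simp add: j Nc_Suc Mc_def)
qed simp

theorem mainTheorem4:
  fixes \<mu>0 :: "nat pmf" and r :: real
  assumes "0 < r" and "r < 1"
    and "integrable (measure_pmf \<mu>0) real"
    and "measure_pmf.expectation \<mu>0 real = r"
  shows "(\<exists>(P :: (nat \<Rightarrow> real) measure) \<eta>0 N M.
            nonlinear_process P \<mu>0 \<eta>0 N \<and> md1_queue P r \<eta>0 M \<and>
            (\<forall>t. AE \<omega> in P. dyn \<eta>0 N t \<omega> \<le> dyn \<eta>0 M t \<omega>))
       \<and> ((\<exists>l0>0. (\<integral>\<^sup>+ n. ennreal (exp (l0 * real n)) \<partial>measure_pmf \<mu>0) < \<infinity>) \<longrightarrow>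
           (\<forall>(P :: 'w measure) \<eta>0 N. nonlinear_process P \<mu>0 \<eta>0 N \<longrightarrow>
              (\<exists>l>0. (SUP t. \<integral>\<^sup>+ \<omega>. ennreal (exp (l * real (dyn \<eta>0 N t \<omega>))) \<partial>P) < \<infinity>)))"
proof (intro conjI impI allI)
  have mean: "(\<integral>\<^sup>+n. of_nat n \<partial>measure_pmf \<mu>0) = ennreal r"
    by (rule mean_mu0[OF assms(3,4)])
  have r0: "0 \<le> r" using assms(1) by simp
  show "\<exists>(P :: (nat \<Rightarrow> real) measure) \<eta>0 N M.
            nonlinear_process P \<mu>0 \<eta>0 N \<and> md1_queue P r \<eta>0 M \<and>
            (\<forall>t. AE \<omega> in P. dyn \<eta>0 N t \<omega> \<le> dyn \<eta>0 M t \<omega>)"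
    using construct_np[of \<mu>0] construct_md1[OF r0, of \<mu>0] construct_le[OF r0 mean]
    by (intro exI[of _ Pm] exI[of _ "eta0c \<mu>0"] exI[of _ "Nc \<mu>0"] exI[of _ "Mc r"]) (auto intro: AE_I2)
next
  fix P :: "'w measure" and \<eta>0 N
  assume l0: "\<exists>l0>0. (\<integral>\<^sup>+ n. ennreal (exp (l0 * real n)) \<partial>measure_pmf \<mu>0) < \<infinity>"
    and np: "nonlinear_process P \<mu>0 \<eta>0 N"
  from l0 obtain l0 where "0 < l0" "(\<integral>\<^sup>+ n. ennreal (exp (l0 * real n)) \<partial>measure_pmf \<mu>0) < \<infinity>" by blast
  then show "\<exists>l>0. (SUP t. \<integral>\<^sup>+ \<omega>. ennreal (exp (l * real (dyn \<eta>0 N t \<omega>))) \<partial>P) < \<infinity>"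
    using part2[OF assms _ _ np] by blast
qed


end
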